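(* The 2-sided ideal $\Delta[\Delta,\Delta]\Delta$ of $\Delta$ generated by $[\Delta,\Delta]={\rm Span}\{uv-vu : u,v\in\Delta\}$ coincides with the kernel of the unique $\mathbb F$-algebra homomorphism $\Delta\to\mathbb F[\overline A,\overline B,\overline C]$ sending $A\mapsto\overline A$, $B\mapsto\overline B$, $C\mapsto\overline C$, where $\overline A,\overline B,\overline C$ are mutually commuting indeterminates.
   Context: Let $\mathbb F$ be a field and fix a nonzero $q\in\mathbb F$ with $q^4\neq 1$. The universal Askey--Wilson algebra $\Delta$ is the associative $\mathbb F$-algebra with 1 with generators $A,B,C$ subject to the relations that each of $A+\frac{qBC-q^{-1}CB}{q^2-q^{-2}}$, $B+\frac{qCA-q^{-1}AC}{q^2-q^{-2}}$, $C+\frac{qAB-q^{-1}BA}{q^2-q^{-2}}$ is central. (The homomorphism to the polynomial algebra exists and is surjective.) *)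

theory Defs
  imports "HOL-Library.Poly_Mapping"
begin

datatype gen = GA | GB | GC

datatype word = Word "gen list"

instantiation word :: monoid_add
begin
definition zero_word :: word where "zero_word = Word []"
fun plus_word :: "word \<Rightarrow> word \<Rightarrow> word" where
  "plus_word (Word xs) (Word ys) = Word (xs @ ys)"
instance
proof
  fix a b c :: word
  show "a + b + c = a + (b + c)" by (cases a; cases b; cases c) simp
  show "0 + a = a" by (cases a) (simp add: zero_word_def)
  show "a + 0 = a" by (cases a) (simp add: zero_word_def)
qed
end

(* the free (noncommutative) associative algebra F<A,B,C> with 1 *)
type_synonym 'k freealg = "word \<Rightarrow>\<^sub>0 'k"

(* the commutative polynomial algebra F[Abar,Bbar,Cbar] *)
type_synonym 'k cpoly = "(gen \<Rightarrow>\<^sub>0 nat) \<Rightarrow>\<^sub>0 'k"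

definition sc :: "'k::field \<Rightarrow> 'k freealg" where
  "sc c = Poly_Mapping.single 0 c"

definition gn :: "gen \<Rightarrow> 'k::field freealg" where
  "gn g = Poly_Mapping.single (Word [g]) 1"

inductive_set ideal_gen :: "'a::ring set \<Rightarrow> 'a set" for S where
  base: "x \<in> S \<Longrightarrow> x \<in> ideal_gen S"
| zero: "0 \<in> ideal_gen S"
| add: "x \<in> ideal_gen S \<Longrightarrow> y \<in> ideal_gen S \<Longrightarrow> x + y \<in> ideal_gen S"
| lmult: "x \<in> ideal_gen S \<Longrightarrow> r * x \<in> ideal_gen S"
| rmult: "x \<in> ideal_gen S \<Longrightarrow> x * r \<in> ideal_gen S"

definition aw_alpha :: "'k::field \<Rightarrow> gen \<Rightarrow> gen \<Rightarrow> gen \<Rightarrow> 'k freealg" where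
  "aw_alpha q X Y Z = gn X + sc (q / (q^2 - inverse q ^ 2)) * gn Y * gn Z
                          - sc (inverse q / (q^2 - inverse q ^ 2)) * gn Z * gn Y"

(* defining ideal of Delta inside F<A,B,C>: the three elements above are central *)
definition aw_ideal :: "'k::field \<Rightarrow> 'k freealg set" where
  "aw_ideal q = ideal_gen
     {a * x - x * a | a x. a \<in> {aw_alpha q GA GB GC, aw_alpha q GB GC GA, aw_alpha q GC GA GB}}"

(* Delta = F<A,B,C> / aw_ideal q; an element of Delta is represented by x.
   Preimage in F<A,B,C> of the two-sided ideal Delta[Delta,Delta]Delta of Delta
   (commutators of Delta are images of commutators of representatives). *)
definition aw_comm_ideal_preimage :: "'k::field \<Rightarrow> 'k freealg set" where
  "aw_comm_ideal_preimage q =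
     {x. \<exists>y \<in> ideal_gen {u * v - v * u | u v :: 'k freealg. True}. x - y \<in> aw_ideal q}"

fun word_exps :: "word \<Rightarrow> (gen \<Rightarrow>\<^sub>0 nat)" where
  "word_exps (Word xs) = (\<Sum>g\<leftarrow>xs. Poly_Mapping.single g 1)"

(* the F-algebra homomorphism F<A,B,C> -> F[Abar,Bbar,Cbar], A|->Abar etc.;
   it factors through Delta, giving the homomorphism Delta -> F[Abar,Bbar,Cbar] *)
definition abel_hom :: "'k::field freealg \<Rightarrow> 'k cpoly" where
  "abel_hom x = (\<Sum>w\<in>Poly_Mapping.keys x. Poly_Mapping.single (word_exps w) (Poly_Mapping.lookup x w))"

end

theory Submission
  imports Defs "HOL-Library.Multiset"
begin

abbreviation CI :: "'k::field freealg set" where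
  "CI \<equiv> ideal_gen {u * v - v * u | u v :: 'k freealg. True}"

lemma ig_neg: "(x::'a::ring_1) \<in> ideal_gen S \<Longrightarrow> - x \<in> ideal_gen S"
  using ideal_gen.lmult[of x S "-1"] by simp

lemma ig_diff: "(x::'a::ring_1) \<in> ideal_gen S \<Longrightarrow> y \<in> ideal_gen S \<Longrightarrow> x - y \<in> ideal_gen S"
  using ideal_gen.add[OF _ ig_neg] by (metis diff_conv_add_uminus)

lemma ig_sum: "(\<And>i. i \<in> A \<Longrightarrow> f i \<in> ideal_gen S) \<Longrightarrow> sum f A \<in> ideal_gen S"
  by (induction A rule: infinite_finite_induct) (auto intro: ideal_gen.intros)

lemma ig_mono: "x \<in> ideal_gen S \<Longrightarrow> S \<subseteq> ideal_gen T \<Longrightarrow> x \<in> ideal_gen T"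
  by (induction rule: ideal_gen.induct) (auto intro: ideal_gen.intros)

lemma aw_sub: "aw_ideal q \<subseteq> CI"
  unfolding aw_ideal_def
proof
  fix x assume "x \<in> ideal_gen {a * x - x * a | a x. a \<in> {aw_alpha q GA GB GC, aw_alpha q GB GC GA, aw_alpha q GC GA GB}}"
  then show "x \<in> CI" by (rule ig_mono) (auto intro!: ideal_gen.base)
qed

lemma lhs_eq: "aw_comm_ideal_preimage q = CI"
proof safe
  fix x assume "x \<in> aw_comm_ideal_preimage q"
  then obtain y where y: "y \<in> CI" "x - y \<in> aw_ideal q" unfolding aw_comm_ideal_preimage_def by auto
  have "(x - y) + y \<in> CI" using y aw_sub by (blast intro: ideal_gen.add)
  then show "x \<in> CI" by simp
next
  fix x :: "'a freealg" assume "x \<in> CI"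
  then show "x \<in> aw_comm_ideal_preimage q" unfolding aw_comm_ideal_preimage_def aw_ideal_def
    by (auto intro!: bexI[of _ x] ideal_gen.zero)
qed

lemma abel_hom_sup:
  assumes "finite S" "Poly_Mapping.keys x \<subseteq> S"
  shows "abel_hom x = (\<Sum>w\<in>S. Poly_Mapping.single (word_exps w) (Poly_Mapping.lookup x w))"
  unfolding abel_hom_def
  by (rule sum.mono_neutral_left) (use assms in \<open>auto simp: in_keys_iff\<close>)

lemma abel_hom_add: "abel_hom (x + y) = abel_hom x + abel_hom y"
proof -
  let ?S = "Poly_Mapping.keys x \<union> Poly_Mapping.keys y"
  have "Poly_Mapping.keys (x+y) \<subseteq> ?S" by (rule keys_add)
  then show ?thesis
    by (simp add: abel_hom_sup[of ?S] abel_hom_sup[of ?S x] abel_hom_sup[of ?S y]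
        lookup_add single_add sum.distrib)
qed

lemma abel_hom_zero[simp]: "abel_hom 0 = 0"
  by (simp add: abel_hom_def)

lemma abel_hom_sum: "abel_hom (sum f A) = (\<Sum>i\<in>A. abel_hom (f i))"
  by (induction A rule: infinite_finite_induct) (auto simp: abel_hom_add)

lemma abel_hom_single[simp]: "abel_hom (Poly_Mapping.single w c) = Poly_Mapping.single (word_exps w) c"
  by (subst abel_hom_sup[of "{w}"]) auto

lemma mono_decomp: "x = (\<Sum>w\<in>Poly_Mapping.keys x. Poly_Mapping.single w (Poly_Mapping.lookup x w))"
  by (rule poly_mapping_eqI) (auto simp: lookup_sum lookup_single when_def in_keys_iff
       sum.delta' split: if_splits)

lemma word_exps_add: "word_exps (v + w) = word_exps v + word_exps w"
  by (cases v; cases w) auto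

lemma abel_hom_mult: "abel_hom (x * y) = abel_hom x * abel_hom y"
proof -
  have "abel_hom (x * y) = abel_hom ((\<Sum>v\<in>Poly_Mapping.keys x. Poly_Mapping.single v (Poly_Mapping.lookup x v)) *
          (\<Sum>w\<in>Poly_Mapping.keys y. Poly_Mapping.single w (Poly_Mapping.lookup y w)))"
    using mono_decomp[of x] mono_decomp[of y] by simp
  also have "\<dots> = (\<Sum>v\<in>Poly_Mapping.keys x. \<Sum>w\<in>Poly_Mapping.keys y. abel_hom (Poly_Mapping.single v (Poly_Mapping.lookup x v) * Poly_Mapping.single w (Poly_Mapping.lookup y w)))"
    by (simp add: sum_distrib_left sum_distrib_right abel_hom_sum) (rule sum.swap)
  also have "\<dots> = (\<Sum>v\<in>Poly_Mapping.keys x. \<Sum>w\<in>Poly_Mapping.keys y. abel_hom (Poly_Mapping.single v (Poly_Mapping.lookup x v)) * abel_hom (Poly_Mapping.single w (Poly_Mapping.lookup y w)))"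
    by (simp add: mult_single word_exps_add)
  also have "\<dots> = abel_hom x * abel_hom y"
    by (subst (3) mono_decomp[of x], subst (3) mono_decomp[of y])
       (simp add: sum_distrib_left sum_distrib_right abel_hom_sum, rule sum.swap)
  finally show ?thesis .
qed

lemma CI_ker: "x \<in> CI \<Longrightarrow> abel_hom x = 0"
proof (induction rule: ideal_gen.induct)
  case (base x)
  then obtain u v where "x = u * v - v * u" by blast
  then have "x + v * u = u * v" by simp
  then have "abel_hom x + abel_hom (v * u) = abel_hom (u * v)" by (metis abel_hom_add)
  then show ?case by (simp add: abel_hom_mult mult.commute)
qed (auto simp: abel_hom_add abel_hom_mult)


lemma swap_CI: "Poly_Mapping.single (Word (u @ [g, h] @ v)) (1::'k::field) - Poly_Mapping.single (Word (u @ [h, g] @ v)) 1 \<in> CI"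
proof -
  let ?U = "Poly_Mapping.single (Word u) (1::'k)" and ?V = "Poly_Mapping.single (Word v) (1::'k)"
  have "gn g * gn h - gn h * gn g \<in> (CI :: 'k freealg set)" by (auto intro: ideal_gen.base)
  then have "?U * (gn g * gn h - gn h * gn g) * ?V \<in> CI" by (blast intro: ideal_gen.intros)
  also have "?U * (gn g * gn h - gn h * gn g) * ?V = Poly_Mapping.single (Word (u @ [g, h] @ v)) 1 - Poly_Mapping.single (Word (u @ [h, g] @ v)) 1"
    by (simp add: gn_def algebra_simps mult_single)
  finally show ?thesis .
qed

lemma move_CI: "Poly_Mapping.single (Word (u @ x # v)) (1::'k::field) - Poly_Mapping.single (Word (x # u @ v)) 1 \<in> CI"
proof (induction u arbitrary: v rule: rev_induct)
  case Nil then show ?case by (simp add: ideal_gen.zero)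
next
  case (snoc a u)
  let ?S = "\<lambda>l. Poly_Mapping.single (Word l) (1::'k)"
  have "?S (u @ [a, x] @ v) - ?S (u @ [x, a] @ v) \<in> CI" by (rule swap_CI)
  moreover have "?S ([] @ (u @ x # a # v)) - ?S ([] @ (x # u @ a # v)) \<in> CI"
  proof -
    have "?S (u @ x # a # v) - ?S (x # u @ a # v) \<in> CI" by (fact snoc.IH[where v="a#v"])
    thus ?thesis by simp
  qed
  ultimately have "(?S (u @ [a, x] @ v) - ?S (u @ [x, a] @ v)) + (?S ([] @ (u @ x # a # v)) - ?S ([] @ (x # u @ a # v))) \<in> CI"
    by (rule ideal_gen.add)
  also have "(?S (u @ [a, x] @ v) - ?S (u @ [x, a] @ v)) + (?S ([] @ (u @ x # a # v)) - ?S ([] @ (x # u @ a # v)))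
     = ?S ((u @ [a]) @ x # v) - ?S (x # (u @ [a]) @ v)" by simp
  finally show ?case .
qed

lemma perm_CI: "mset xs = mset ys \<Longrightarrow> Poly_Mapping.single (Word xs) (1::'k::field) - Poly_Mapping.single (Word ys) 1 \<in> CI"
proof (induction xs arbitrary: ys)
  case Nil then show ?case by (simp add: ideal_gen.zero)
next
  case (Cons x xs)
  let ?S = "\<lambda>l. Poly_Mapping.single (Word l) (1::'k)"
  have "x \<in> set ys" using Cons.prems by (metis list.set_intros(1) set_mset_mset)
  then obtain u v where ys: "ys = u @ x # v" by (meson split_list)
  have "mset xs = mset (u @ v)" using Cons.prems ys by simp
  then have "?S xs - ?S (u @ v) \<in> CI" by (rule Cons.IH)
  then have "gn x * (?S xs - ?S (u @ v)) \<in> CI" by (rule ideal_gen.lmult)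
  also have "gn x * (?S xs - ?S (u @ v)) = ?S (x # xs) - ?S (x # u @ v)"
    by (simp add: gn_def algebra_simps mult_single)
  finally have 1: "?S (x # xs) - ?S (x # u @ v) \<in> CI" .
  have 2: "?S (u @ x # v) - ?S (x # u @ v) \<in> CI" by (rule move_CI)
  have "(?S (x # xs) - ?S (x # u @ v)) - (?S (u @ x # v) - ?S (x # u @ v)) \<in> CI"
    using 1 2 by (rule ig_diff)
  then show ?case using ys by simp
qed

fun wlist :: "word \<Rightarrow> gen list" where "wlist (Word xs) = xs"

definition cw :: "(gen \<Rightarrow>\<^sub>0 nat) \<Rightarrow> word" where
  "cw e = Word (replicate (Poly_Mapping.lookup e GA) GA @ replicate (Poly_Mapping.lookup e GB) GB
      @ replicate (Poly_Mapping.lookup e GC) GC)"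

lemma lookup_exps: "Poly_Mapping.lookup (word_exps (Word xs)) g = count (mset xs) g"
  by (induction xs) (simp_all add: lookup_add lookup_single when_def)

lemma count_cw: "count (mset (wlist (cw e))) g = Poly_Mapping.lookup e g"
  by (cases g) (auto simp: cw_def)

lemma exps_cw: "word_exps (cw e) = e"
  by (rule poly_mapping_eqI) (metis count_cw lookup_exps wlist.simps word.exhaust)

lemma cw_inj: "cw a = cw b \<longleftrightarrow> a = b"
  by (metis exps_cw)

lemma mset_cw: "mset (wlist (cw (word_exps (Word xs)))) = mset xs"
  by (rule multiset_eqI) (simp only: count_cw lookup_exps)

lemma canon_CI: "Poly_Mapping.single w (c::'k::field) - Poly_Mapping.single (cw (word_exps w)) c \<in> CI"
proof -
  obtain xs where w: "w = Word xs" by (cases w)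
  have "cw (word_exps w) = Word (wlist (cw (word_exps w)))" by (metis wlist.simps word.exhaust)
  then have "Poly_Mapping.single w (1::'k) - Poly_Mapping.single (cw (word_exps w)) 1 \<in> CI"
  proof -
    have "Poly_Mapping.single (Word xs) (1::'k) - Poly_Mapping.single (Word (wlist (cw (word_exps (Word xs))))) 1 \<in> CI"
      by (rule perm_CI) (rule mset_cw[symmetric])
    then show ?thesis using w \<open>cw (word_exps w) = Word (wlist (cw (word_exps w)))\<close> by simp
  qed
  then have "sc c * (Poly_Mapping.single w (1::'k) - Poly_Mapping.single (cw (word_exps w)) 1) \<in> CI"
    by (rule ideal_gen.lmult)
  also have "sc c * (Poly_Mapping.single w (1::'k) - Poly_Mapping.single (cw (word_exps w)) 1)
     = Poly_Mapping.single w c - Poly_Mapping.single (cw (word_exps w)) c"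
    by (simp add: sc_def right_diff_distrib mult_single)
  finally show ?thesis .
qed

lemma ker_CI:
  assumes "abel_hom (x::'k::field freealg) = 0"
  shows "x \<in> CI"
proof -
  let ?K = "Poly_Mapping.keys x"
  define y where "y = (\<Sum>w\<in>?K. Poly_Mapping.single (cw (word_exps w)) (Poly_Mapping.lookup x w))"
  have "x - y = (\<Sum>w\<in>?K. Poly_Mapping.single w (Poly_Mapping.lookup x w) - Poly_Mapping.single (cw (word_exps w)) (Poly_Mapping.lookup x w))"
    unfolding y_def by (subst (1) mono_decomp) (simp add: sum_subtractf)
  also have "\<dots> \<in> CI" by (rule ig_sum) (rule canon_CI)
  finally have xy: "x - y \<in> CI" .
  have "y = 0"
  proof (rule poly_mapping_eqI)
    fix k
    have "Poly_Mapping.lookup y k = (\<Sum>w\<in>?K. (Poly_Mapping.lookup x w when cw (word_exps w) = k))"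
      unfolding y_def by (simp add: lookup_sum lookup_single)
    also have "\<dots> = 0"
    proof (cases "\<exists>e. cw e = k")
      case True
      then obtain e where e: "k = cw e" by auto
      have "(\<Sum>w\<in>?K. (Poly_Mapping.lookup x w when cw (word_exps w) = k))
          = (\<Sum>w\<in>?K. (Poly_Mapping.lookup x w when word_exps w = e))"
        using e by (simp add: cw_inj)
      also have "\<dots> = Poly_Mapping.lookup (abel_hom x) e"
        unfolding abel_hom_def by (simp add: lookup_sum lookup_single when_def eq_commute)
      finally show ?thesis using assms by simp
    next
      case False then show ?thesis by (intro sum.neutral) auto
    qed
    finally show "Poly_Mapping.lookup y k = Poly_Mapping.lookup 0 k" by simp
  qed
  with xy show ?thesis by simp
qed

theorem proposition11p4:
  fixes q :: "'k::field"
  assumes "q \<noteq> 0" and "q ^ 4 \<noteq> 1"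
  shows "aw_comm_ideal_preimage q = {x :: 'k freealg. abel_hom x = 0}"
  using lhs_eq[of q] CI_ker ker_CI by blast

end
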